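(* For every pair of integers $k\ge3$ and $f\ge1$ there is $n_1=n_1(k,f)$ such that for every $n\ge n_1$ divisible by $k$, the graph $B_{k,n/k}$ (which has $n$ vertices) is $\frac{1}{2k^2}$-far from being induced $\{C_4,B_{k,f}\}$-free.
   Context: For integers $k\ge3$ and $m\ge1$, $B_{k,m}$ is the graph obtained from the cycle $C_k$ by replacing each vertex by a clique of size $m$ and each edge by a complete bipartite graph between the corresponding cliques (non-adjacent vertices of $C_k$ give empty bipartite graphs). An $n$-vertex graph is $\varepsilon$-far from a property if at least $\varepsilon n^2$ edge additions/deletions are needed to obtain the property. A graph is induced $\mathcal F$-free if it contains no induced subgraph isomorphic to any member of $\mathcal F$. *)

theory Defs
  imports Complex_Main
begin

type_synonym 'a graph = "'a set \<times> 'a set set"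

definition simple_graph :: "'a graph \<Rightarrow> bool" where
  "simple_graph G \<longleftrightarrow> finite (fst G) \<and>
     (\<forall>e\<in>snd G. \<exists>u v. u \<noteq> v \<and> u \<in> fst G \<and> v \<in> fst G \<and> e = {u, v})"

definition contains_induced :: "'a graph \<Rightarrow> 'b graph \<Rightarrow> bool" where
  "contains_induced G H \<longleftrightarrow> (\<exists>\<phi>. inj_on \<phi> (fst H) \<and> \<phi> ` fst H \<subseteq> fst G \<and>
     (\<forall>u\<in>fst H. \<forall>v\<in>fst H. u \<noteq> v \<longrightarrow>
        ({u, v} \<in> snd H \<longleftrightarrow> {\<phi> u, \<phi> v} \<in> snd G)))"

definition cycle_graph :: "nat \<Rightarrow> nat graph" where
  "cycle_graph k = ({0..<k}, {{i, (i + 1) mod k} | i. i < k})"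

text \<open>B_{k,m}: blow-up of C_k where each vertex becomes a clique of size m and
  each edge a complete bipartite graph. Vertex (i,j) lies in the i-th clique.\<close>
definition blowup :: "nat \<Rightarrow> nat \<Rightarrow> (nat \<times> nat) graph" where
  "blowup k m = ({0..<k} \<times> {0..<m},
     {{(i, j), (i', j')} | i j i' j'. i < k \<and> j < m \<and> i' < k \<and> j' < m \<and>
        (i, j) \<noteq> (i', j') \<and> (i' = i \<or> i' = (i + 1) mod k)})"

definition far_from :: "real \<Rightarrow> ('a graph \<Rightarrow> bool) \<Rightarrow> 'a graph \<Rightarrow> bool" where
  "far_from eps P G \<longleftrightarrow> (\<forall>E'. simple_graph (fst G, E') \<and> P (fst G, E') \<longrightarrow>
      real (card ((snd G - E') \<union> (E' - snd G))) \<ge> eps * real (card (fst G)) ^ 2)"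

definition induced_C4_Bkf_free :: "nat \<Rightarrow> nat \<Rightarrow> 'a graph \<Rightarrow> bool" where
  "induced_C4_Bkf_free k f G \<longleftrightarrow>
     \<not> contains_induced G (cycle_graph 4) \<and> \<not> contains_induced G (blowup k f)"

end

theory Submission
  imports Defs "HOL-Library.FuncSet"
begin


definition goodt :: "nat \<Rightarrow> (nat \<Rightarrow> nat \<Rightarrow> nat \<Rightarrow> nat \<Rightarrow> bool) \<Rightarrow> (nat \<Rightarrow> nat) \<Rightarrow> bool" where
 "goodt k Bd t \<longleftrightarrow> (\<forall>i<k. \<forall>i'<k. i \<noteq> i' \<longrightarrow> \<not> Bd i (t i) i' (t i'))"

definition Tset where "Tset k Bd C = {t \<in> PiE {0..<k} C. goodt k Bd t}"

definition Cn where "Cn Bd i0 C x = (\<lambda>i. if i = i0 then C i - {x} else {y \<in> C i. \<not> Bd i0 x i y})"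

lemma finite_Tset: assumes "\<And>i. i<k \<Longrightarrow> C i \<subseteq> {0..<m}" shows "finite (Tset k Bd C)"
proof -
  have "finite (PiE {0..<k} C)" by (rule finite_PiE) (auto intro: finite_subset[OF assms])
  thus ?thesis unfolding Tset_def by simp
qed

lemma card_PiE_le:
  assumes "\<And>i. i<k \<Longrightarrow> card (C i) \<le> m" "i0 < k" "card (C i0) \<le> 1" "m \<ge> 1"
  shows "card (PiE {0..<k} C) \<le> m^(k-1)"
proof -
  have "card (PiE {0..<k} C) = (\<Prod>i\<in>{0..<k}. card (C i))" by (simp add: card_PiE)
  also have "\<dots> = (\<Prod>i\<in>{0..<k}-{i0}. card (C i)) * card (C i0)"
    using assms(2) by (subst prod.subset_diff[of "{i0}"]) auto
  also have "\<dots> \<le> (\<Prod>i\<in>{0..<k}-{i0}. card (C i)) * 1" using assms(3) by (intro mult_left_mono) auto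
  also have "\<dots> \<le> m^(k-1)" unfolding mult_1_right using assms by (intro prod_le_power[where k="k-1"]) auto
  finally show ?thesis .
qed

lemma Tset_Cn:
  assumes sym: "\<And>i a i' b. Bd i a i' b \<Longrightarrow> Bd i' b i a" and i0: "i0 < k" and x: "x \<in> C i0"
  shows "t \<in> Tset k Bd (Cn Bd i0 C x) \<longleftrightarrow> t \<in> Tset k Bd C \<and> t i0 \<noteq> x \<and> t(i0 := x) \<in> Tset k Bd C"
proof
  assume t: "t \<in> Tset k Bd (Cn Bd i0 C x)"
  hence tp: "t \<in> PiE {0..<k} (Cn Bd i0 C x)" and g: "goodt k Bd t" by (auto simp: Tset_def)
  have tC: "t \<in> PiE {0..<k} C" using tp by (auto simp: PiE_def Pi_def Cn_def split: if_splits)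
  have "t i0 \<noteq> x" using tp i0 by (auto simp: PiE_def Pi_def Cn_def)
  moreover have "t(i0:=x) \<in> PiE {0..<k} C" using tC x i0 by (auto simp: PiE_def Pi_def extensional_def)
  moreover have "goodt k Bd (t(i0:=x))"
    unfolding goodt_def
  proof (intro allI impI)
    fix i i' assume "i<k" "i'<k" "i\<noteq>i'"
    show "\<not> Bd i ((t(i0 := x)) i) i' ((t(i0 := x)) i')"
    proof (cases "i = i0")
      case True
      then have "t i' \<in> Cn Bd i0 C x i'" using tp \<open>i'<k\<close> by (auto simp: PiE_def Pi_def)
      then show ?thesis using True \<open>i\<noteq>i'\<close> by (auto simp: Cn_def)
    next
      case False
      show ?thesis
      proof (cases "i' = i0")
        case True
        then have "t i \<in> Cn Bd i0 C x i" using tp \<open>i<k\<close> by (auto simp: PiE_def Pi_def)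
        then show ?thesis using True False sym by (auto simp: Cn_def)
      next
        case False2: False
        then show ?thesis using False g \<open>i<k\<close> \<open>i'<k\<close> \<open>i\<noteq>i'\<close> by (auto simp: goodt_def)
      qed
    qed
  qed
  ultimately show "t \<in> Tset k Bd C \<and> t i0 \<noteq> x \<and> t(i0 := x) \<in> Tset k Bd C"
    using tC g by (auto simp: Tset_def)
next
  assume a: "t \<in> Tset k Bd C \<and> t i0 \<noteq> x \<and> t(i0 := x) \<in> Tset k Bd C"
  hence tC: "t \<in> PiE {0..<k} C" and g: "goodt k Bd t" and g2: "goodt k Bd (t(i0:=x))" and ne: "t i0 \<noteq> x"
    by (auto simp: Tset_def)
  have "t \<in> PiE {0..<k} (Cn Bd i0 C x)"
  proof -
    { fix i assume "i<k"
      have "t i \<in> Cn Bd i0 C x i"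
      proof (cases "i = i0")
        case True thus ?thesis using tC ne \<open>i<k\<close> by (auto simp: Cn_def PiE_def Pi_def)
      next
        case False
        have "\<not> Bd i0 ((t(i0 := x)) i0) i ((t(i0 := x)) i)" using g2 i0 \<open>i<k\<close> False
          unfolding goodt_def by metis
        thus ?thesis using False tC \<open>i<k\<close> by (auto simp: Cn_def PiE_def Pi_def)
      qed }
    thus ?thesis using tC by (auto simp: PiE_def Pi_def)
  qed
  thus "t \<in> Tset k Bd (Cn Bd i0 C x)" using g by (simp add: Tset_def)
qed


lemma card_Id_on: "card (Id_on A) = card A"
proof -
  have "Id_on A = (\<lambda>x. (x,x)) ` A" by (auto simp: Id_on_def)
  moreover have "inj_on (\<lambda>x. (x,x)) A" by (auto intro: inj_onI)
  ultimately show ?thesis by (simp add: card_image)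
qed

lemma cs_sum:
  fixes a :: "'b \<Rightarrow> real"
  assumes "finite S"
  shows "(\<Sum>u\<in>S. a u)^2 \<le> real (card S) * (\<Sum>u\<in>S. (a u)^2)"
proof -
  have "0 \<le> (\<Sum>u\<in>S. \<Sum>v\<in>S. (a u - a v)^2)" by (intro sum_nonneg) auto
  also have "\<dots> = (\<Sum>u\<in>S. \<Sum>v\<in>S. (a u)^2 + (a v)^2 - 2 * (a u * a v))"
    by (simp add: power2_eq_square algebra_simps)
  also have "\<dots> = 2 * (real (card S) * (\<Sum>u\<in>S. (a u)^2)) - 2 * (\<Sum>u\<in>S. a u)^2"
    by (simp add: sum_subtractf sum.distrib sum_distrib_left sum_distrib_right power2_eq_square algebra_simps)
  finally show ?thesis by simp
qed

lemma step_sum: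
  assumes sym: "\<And>i a i' b. Bd i a i' b \<Longrightarrow> Bd i' b i a" and i0: "i0 < k"
    and C: "\<And>i. i<k \<Longrightarrow> C i \<subseteq> {0..<m}" and m: "m \<ge> 1"
  shows "real (card (Tset k Bd C))^2 / real m^(k-1) - real (card (Tset k Bd C))
     \<le> (\<Sum>x\<in>C i0. real (card (Tset k Bd (Cn Bd i0 C x))))"
proof -
  define T where "T = Tset k Bd C"
  define s where "s = (\<lambda>t::nat\<Rightarrow>nat. t(i0 := undefined))"
  define S where "S = s ` T"
  define fib where "fib u = {t\<in>T. s t = u}" for u
  have fT: "finite T" unfolding T_def by (rule finite_Tset[where m=m]) (rule C)
  have fS: "finite S" unfolding S_def using fT by simp
  have ffib: "finite (fib u)" for u unfolding fib_def using fT by simp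
  have cardT: "card T = (\<Sum>u\<in>S. card (fib u))"
    using sum.group[OF fT fS, of s "\<lambda>_. 1::nat"] unfolding S_def fib_def by simp
  define A where "A = {p\<in>T\<times>T. s (fst p) = s (snd p)}"
  have "A = Sigma T (\<lambda>t. fib (s t))" unfolding A_def fib_def by auto
  hence "card A = (\<Sum>t\<in>T. card (fib (s t)))" using fT ffib by simp
  also have "\<dots> = (\<Sum>u\<in>S. \<Sum>t\<in>{t\<in>T. s t = u}. card (fib (s t)))"
    using sum.group[OF fT fS, of s "\<lambda>t. card (fib (s t))"] unfolding S_def by simp
  also have "\<dots> = (\<Sum>u\<in>S. card (fib u) * card (fib u))"
  proof (intro sum.cong refl)
    fix u assume "u \<in> S"
    have "(\<Sum>t\<in>{t\<in>T. s t = u}. card (fib (s t))) = (\<Sum>t\<in>fib u. card (fib u))"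
      by (intro sum.cong) (auto simp: fib_def)
    thus "(\<Sum>t\<in>{t\<in>T. s t = u}. card (fib (s t))) = card (fib u) * card (fib u)" by simp
  qed
  finally have cardA: "card A = (\<Sum>u\<in>S. (card (fib u))^2)" by (simp add: power2_eq_square)
  define Q where "Q = Sigma (C i0) (\<lambda>x. Tset k Bd (Cn Bd i0 C x))"
  have fC0: "finite (C i0)" using C[OF i0] finite_subset by blast
  have CnC: "\<And>i. i<k \<Longrightarrow> Cn Bd i0 C x i \<subseteq> {0..<m}" for x using C by (auto simp: Cn_def)
  have cardQ: "card Q = (\<Sum>x\<in>C i0. card (Tset k Bd (Cn Bd i0 C x)))"
    unfolding Q_def using fC0 finite_Tset[where m=m, OF CnC] by simp
  define P where "P = A - Id_on T"
  have IdA: "Id_on T \<subseteq> A" unfolding A_def by auto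
  have fA: "finite A" unfolding A_def using fT by simp
  have cardP: "card P = card A - card T" unfolding P_def
    using card_Diff_subset[OF finite_subset[OF IdA fA] IdA] by (simp add: card_Id_on fT)
  have sext: "t = t'" if "s t = s t'" "t i0 = t' i0" for t t'
  proof
    fix j
    have e: "(t(i0 := undefined)) j = (t'(i0 := undefined)) j" using that(1) unfolding s_def by simp
    show "t j = t' j" using e that(2) by (cases "j = i0") auto
  qed
  have supd: "t' = t(i0 := t' i0)" if "s t = s t'" for t t'
  proof
    fix j
    have e: "(t(i0 := undefined)) j = (t'(i0 := undefined)) j" using that(1) unfolding s_def by simp
    show "t' j = (t(i0 := t' i0)) j" using e by (cases "j = i0") auto
  qed
  define h where "h = (\<lambda>(t::nat\<Rightarrow>nat, t'::nat\<Rightarrow>nat). (t' i0, t))"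
  have hP: "h ` P \<subseteq> Q"
  proof
    fix y assume "y \<in> h ` P"
    then obtain t t' where tt: "(t,t') \<in> P" and y: "y = (t' i0, t)" by (auto simp: h_def)
    have tT: "t \<in> T" and t'T: "t' \<in> T" and st: "s t = s t'" and ne: "t \<noteq> t'"
      using tt by (auto simp: P_def A_def)
    have x: "t' i0 \<in> C i0" using t'T i0 by (auto simp: T_def Tset_def PiE_def Pi_def)
    have "t i0 \<noteq> t' i0" using sext st ne by blast
    moreover have "t(i0 := t' i0) \<in> T" using supd[OF st] t'T by simp
    ultimately have "t \<in> Tset k Bd (Cn Bd i0 C (t' i0))"
      using Tset_Cn[where Bd=Bd and C=C, OF sym i0 x] tT by (simp add: T_def)
    thus "y \<in> Q" using x y by (simp add: Q_def)
  qed
  have hinj: "inj_on h P"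
  proof (rule inj_onI)
    fix p q assume "p \<in> P" "q \<in> P" "h p = h q"
    then obtain t t' u u' where p: "p = (t,t')" and q: "q = (u,u')" and st: "s t = s t'" and su: "s u = s u'"
      and e: "t' i0 = u' i0" "t = u"
      by (cases p, cases q) (auto simp: P_def A_def h_def)
    have "t' = u'" using supd[OF st] supd[OF su] e by metis
    thus "p = q" using p q e by simp
  qed
  have fQ: "finite Q" unfolding Q_def using fC0 finite_Tset[where m=m, OF CnC] by simp
  have PQ: "card P \<le> card Q" using card_inj_on_le[OF hinj hP fQ] .
  have "S \<subseteq> PiE {0..<k} (C(i0 := {undefined}))"
    unfolding S_def s_def T_def Tset_def by (auto simp: PiE_def Pi_def extensional_def)
  moreover have "card (PiE {0..<k} (C(i0 := {undefined}))) \<le> m^(k-1)"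
  proof (rule card_PiE_le[OF _ i0 _ m])
    fix i assume "i<k" thus "card ((C(i0 := {undefined})) i) \<le> m"
    proof (cases "i = i0")
      case False
      have "card (C i) \<le> card {0..<m}" by (rule card_mono) (use C[OF \<open>i<k\<close>] in auto)
      thus ?thesis using False by simp
    qed (use m in simp)
  qed simp
  moreover have "finite (PiE {0..<k} (C(i0 := {undefined})))"
    by (rule finite_PiE) (auto intro: finite_subset[OF C])
  ultimately have cS: "card S \<le> m^(k-1)" by (meson card_mono le_trans)
  have cs: "real (card T)^2 \<le> real (card S) * real (card A)"
    using cs_sum[OF fS, of "\<lambda>u. real (card (fib u))"] unfolding cardT cardA by simp
  have "real (card S) * real (card A) \<le> real m^(k-1) * real (card A)"
  proof (rule mult_right_mono)
    show "real (card S) \<le> real m^(k-1)" using cS by (metis of_nat_le_iff of_nat_power)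
  qed simp
  with cs have "real (card T)^2 \<le> real m^(k-1) * real (card A)" by linarith
  hence 1: "real (card T)^2 / real m^(k-1) \<le> real (card A)" using m by (simp add: field_simps)
  have "card T \<le> card A" using card_mono[OF fA IdA] by (simp add: card_Id_on fT)
  hence "real (card A) - real (card T) \<le> real (card Q)" using PQ cardP by linarith
  with 1 show ?thesis unfolding cardQ T_def by simp
qed

lemma step_exists:
  assumes sym: "\<And>i a i' b. Bd i a i' b \<Longrightarrow> Bd i' b i a" and i0: "i0 < k"
    and C: "\<And>i. i<k \<Longrightarrow> C i \<subseteq> {0..<m}" and m: "m \<ge> 1"
    and c: "c > 0" and mc: "real m \<ge> 2 / c"
    and N: "real (card (Tset k Bd C)) \<ge> c * real m ^ k"
  shows "\<exists>x\<in>C i0. real (card (Tset k Bd (Cn Bd i0 C x))) \<ge> (c^2/2) * real m ^ k"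
proof (rule ccontr)
  assume "\<not> ?thesis"
  hence lt: "\<And>x. x \<in> C i0 \<Longrightarrow> real (card (Tset k Bd (Cn Bd i0 C x))) < (c^2/2) * real m ^ k" by force
  define NN where "NN = real (card (Tset k Bd C))"
  define M where "M = real m ^ (k-1)"
  have Mpos: "M > 0" using m by (simp add: M_def)
  have mk: "real m ^ k = real m * M" unfolding M_def using i0 by (cases k) auto
  have cm: "c * real m \<ge> 2" using mc c by (simp add: field_simps)
  have NM: "NN / M \<ge> c * real m" using N Mpos unfolding NN_def mk by (simp add: field_simps)
  have NM1: "NN / M - 1 \<ge> c * real m / 2" using NM cm by linarith
  have Nnn: "NN \<ge> c * real m * M" using N unfolding NN_def mk by (simp add: algebra_simps)
  have "NN * (NN / M - 1) \<ge> (c * real m * M) * (c * real m / 2)"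
    using Nnn NM1 c Mpos by (intro mult_mono) (auto simp: NN_def)
  hence R: "NN^2 / M - NN \<ge> real m * ((c^2/2) * real m ^ k)"
    unfolding mk using Mpos by (simp add: power2_eq_square field_simps)
  have S: "NN^2 / M - NN \<le> (\<Sum>x\<in>C i0. real (card (Tset k Bd (Cn Bd i0 C x))))"
    using step_sum[OF sym i0 C m] unfolding NN_def M_def by simp
  have fC0: "finite (C i0)" using C[OF i0] finite_subset by blast
  have cC0: "card (C i0) \<le> m" using card_mono[OF _ C[OF i0]] by simp
  have pos: "real m * ((c^2/2) * real m ^ k) > 0" using m c by simp
  show False
  proof (cases "C i0 = {}")
    case True
    hence "(\<Sum>x\<in>C i0. real (card (Tset k Bd (Cn Bd i0 C x)))) = 0" by simp
    thus False using R S pos by linarith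
  next
    case False
    have "(\<Sum>x\<in>C i0. real (card (Tset k Bd (Cn Bd i0 C x)))) < (\<Sum>x\<in>C i0. (c^2/2) * real m ^ k)"
      using lt fC0 False by (intro sum_strict_mono) auto
    also have "\<dots> = real (card (C i0)) * ((c^2/2) * real m ^ k)" by simp
    also have "\<dots> \<le> real m * ((c^2/2) * real m ^ k)" using cC0 c by (intro mult_right_mono) auto
    finally show False using R S by linarith
  qed
qed

fun Mb :: "nat \<Rightarrow> real \<Rightarrow> real" where
  "Mb 0 c = 0"
| "Mb (Suc r) c = max (2/c) (Mb r (c^2/2))"

lemma iter:
  assumes sym: "\<And>i a i' b. Bd i a i' b \<Longrightarrow> Bd i' b i a" and m: "m \<ge> 1"
  shows "sum q {..<k} = r \<Longrightarrow> (\<forall>i<k. C i \<subseteq> {0..<m}) \<Longrightarrow> c > 0 \<Longrightarrow>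
     real (card (Tset k Bd C)) \<ge> c * real m ^ k \<Longrightarrow> real m \<ge> Mb r c \<Longrightarrow>
     \<exists>X. (\<forall>i<k. X i \<subseteq> C i \<and> card (X i) = q i) \<and>
         (\<forall>i<k. \<forall>i'<k. i \<noteq> i' \<longrightarrow> (\<forall>a\<in>X i. \<forall>b\<in>X i'. \<not> Bd i a i' b))"
proof (induction r arbitrary: C c q)
  case 0
  then have "\<forall>i<k. q i = 0" by simp
  thus ?case by (intro exI[of _ "\<lambda>_. {}"]) simp
next
  case (Suc r)
  have "\<exists>i0. i0 < k \<and> q i0 > 0"
  proof (rule ccontr)
    assume "\<nexists>i0. i0 < k \<and> q i0 > 0"
    hence "sum q {..<k} = 0" by (intro sum.neutral) auto
    thus False using Suc.prems(1) by simp
  qed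
  then obtain i0 where i0: "i0 < k" "q i0 > 0" by blast
  have C: "\<And>i. i<k \<Longrightarrow> C i \<subseteq> {0..<m}" using Suc.prems(2) by auto
  have mc: "real m \<ge> 2 / c" and mr: "real m \<ge> Mb r (c^2/2)" using Suc.prems(5) by auto
  obtain x where x: "x \<in> C i0" and N': "real (card (Tset k Bd (Cn Bd i0 C x))) \<ge> (c^2/2) * real m ^ k"
    using step_exists[OF sym i0(1) C m Suc.prems(3) mc Suc.prems(4)] by blast
  define q' where "q' = q(i0 := q i0 - 1)"
  have "sum q' {..<k} = sum q {..<k} - 1"
  proof -
    have "sum q {..<k} = sum q ({..<k} - {i0}) + q i0" using i0 by (subst sum.subset_diff[of "{i0}"]) auto
    moreover have "sum q' {..<k} = sum q' ({..<k} - {i0}) + q' i0" using i0 by (subst sum.subset_diff[of "{i0}"]) auto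
    moreover have "sum q' ({..<k} - {i0}) = sum q ({..<k} - {i0})" unfolding q'_def by (intro sum.cong) auto
    ultimately show ?thesis using i0 unfolding q'_def by simp
  qed
  hence sq': "sum q' {..<k} = r" using Suc.prems(1) by simp
  have CnC: "\<forall>i<k. Cn Bd i0 C x i \<subseteq> {0..<m}" using C by (auto simp: Cn_def)
  have cpos: "c^2/2 > 0" using Suc.prems(3) by simp
  obtain X' where X'1a: "\<forall>i<k. X' i \<subseteq> Cn Bd i0 C x i \<and> card (X' i) = q' i"
    and X'2a: "\<forall>i<k. \<forall>i'<k. i \<noteq> i' \<longrightarrow> (\<forall>a\<in>X' i. \<forall>b\<in>X' i'. \<not> Bd i a i' b)"
    using Suc.IH[OF sq' CnC cpos N' mr] by (elim exE conjE)
  have X'1: "\<And>i. i<k \<Longrightarrow> X' i \<subseteq> Cn Bd i0 C x i \<and> card (X' i) = q' i" using X'1a by simp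
  have X'2: "\<And>i i' a b. i<k \<Longrightarrow> i'<k \<Longrightarrow> i \<noteq> i' \<Longrightarrow> a \<in> X' i \<Longrightarrow> b \<in> X' i' \<Longrightarrow> \<not> Bd i a i' b"
    using X'2a by simp
  define X where "X = X'(i0 := insert x (X' i0))"
  have xn: "x \<notin> X' i0" using X'1[OF i0(1)] by (auto simp: Cn_def)
  have XC: "X' i \<subseteq> C i" if "i<k" for i using X'1[OF that] unfolding Cn_def by (auto split: if_splits)
  have fX': "finite (X' i0)" using finite_subset[OF XC[OF i0(1)] finite_subset[OF C[OF i0(1)] finite_atLeastLessThan]] .
  have "\<forall>i<k. X i \<subseteq> C i \<and> card (X i) = q i"
  proof (intro allI impI)
    fix i assume i: "i<k"
    show "X i \<subseteq> C i \<and> card (X i) = q i"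
    proof (cases "i = i0")
      case True
      have "X i = insert x (X' i0)" unfolding X_def using True by simp
      hence "card (X i) = Suc (card (X' i0))" using xn fX' by simp
      also have "\<dots> = q i" using X'1[OF i] True i0(2) unfolding q'_def by simp
      finally show ?thesis using XC[OF i] x True \<open>X i = insert x (X' i0)\<close> by simp
    next
      case False
      have "X i = X' i" using False by (simp add: X_def)
      moreover have "q' i = q i" using False by (simp add: q'_def)
      ultimately show ?thesis using X'1[OF i] XC[OF i] by simp
    qed
  qed
  moreover have "\<forall>i<k. \<forall>i'<k. i \<noteq> i' \<longrightarrow> (\<forall>a\<in>X i. \<forall>b\<in>X i'. \<not> Bd i a i' b)"
  proof (intro allI impI ballI)
    fix i i' a b assume ii: "i<k" "i'<k" "i \<noteq> i'" and a: "a \<in> X i" and b: "b \<in> X i'"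
    show "\<not> Bd i a i' b"
    proof (cases "i = i0 \<and> a = x")
      case True
      hence "b \<in> X' i'" using b ii unfolding X_def by auto
      hence "b \<in> Cn Bd i0 C x i'" using X'1[OF ii(2)] by auto
      thus ?thesis using True ii by (auto simp: Cn_def)
    next
      case F1: False
      show ?thesis
      proof (cases "i' = i0 \<and> b = x")
        case True
        hence "a \<in> X' i" using a ii unfolding X_def by auto
        hence "a \<in> Cn Bd i0 C x i" using X'1[OF ii(1)] by auto
        hence "\<not> Bd i0 x i a" using True ii by (simp add: Cn_def)
        thus ?thesis using True sym by blast
      next
        case False
        have "a \<in> X' i" using a F1 unfolding X_def by (auto split: if_splits)
        moreover have "b \<in> X' i'" using b False unfolding X_def by (auto split: if_splits)
        ultimately show ?thesis using X'2 ii by blast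
      qed
    qed
  qed
  ultimately show ?case by blast
qed

lemma blowup_memI:
  assumes "i<k" "i'<k" "j<m" "j'<m" "(i,j) \<noteq> (i',j')" "i' = i \<or> i' = (i+1) mod k"
  shows "{(i,j),(i',j')} \<in> snd (blowup k m)"
  unfolding blowup_def snd_conv mem_Collect_eq
  by (intro exI[of _ i] exI[of _ j] exI[of _ i'] exI[of _ j']) (use assms in auto)

lemma blowup_edge:
  assumes "i<k" "i'<k" "j<m" "j'<m" "(i,j) \<noteq> (i',j')"
  shows "{(i,j),(i',j')} \<in> snd (blowup k m) \<longleftrightarrow> (i' = i \<or> i' = (i+1) mod k \<or> i = (i'+1) mod k)"
proof
  assume "{(i,j),(i',j')} \<in> snd (blowup k m)"
  then obtain i1 j1 i2 j2 where e: "{(i,j),(i',j')} = {(i1,j1),(i2,j2)}" and c: "i2 = i1 \<or> i2 = (i1+1) mod k"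
    unfolding blowup_def by auto
  from e have "((i,j) = (i1,j1) \<and> (i',j') = (i2,j2)) \<or> ((i,j) = (i2,j2) \<and> (i',j') = (i1,j1))"
    by (simp add: doubleton_eq_iff)
  thus "i' = i \<or> i' = (i+1) mod k \<or> i = (i'+1) mod k" using c by auto
next
  assume c: "i' = i \<or> i' = (i+1) mod k \<or> i = (i'+1) mod k"
  show "{(i,j),(i',j')} \<in> snd (blowup k m)"
  proof (cases "i' = i \<or> i' = (i+1) mod k")
    case True
    thus ?thesis using assms by (intro blowup_memI) auto
  next
    case False
    hence "i = (i'+1) mod k" using c by auto
    hence "{(i',j'),(i,j)} \<in> snd (blowup k m)" using assms by (intro blowup_memI) auto
    thus ?thesis by (simp add: insert_commute)
  qed
qed

lemma blowup_edges_sub: "snd (blowup k m) \<subseteq> Pow (fst (blowup k m))"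
  unfolding blowup_def by auto





lemma c4_edges: "snd (cycle_graph 4) = {{0,1},{1,2},{2,3},{3,0}}"
proof -
  have a: "{i::nat. i<4} = {0,1,2,3}" by auto
  have b: "((0::nat)+1) mod 4 = 1" "((1::nat)+1) mod 4 = 2" "((2::nat)+1) mod 4 = 3" "((3::nat)+1) mod 4 = 0"
    by simp_all
  have "{{i, (i + 1) mod 4} | i::nat. i < 4} = (\<lambda>i. {i, (i+1) mod 4}) ` {i::nat. i<4}" by (rule setcompr_eq_image)
  also have "\<dots> = {{0,1},{1,2},{2,3},{3,0}}" unfolding a by (simp only: image_insert image_empty b)
  finally show ?thesis unfolding cycle_graph_def by simp
qed

lemma C4_found:
  fixes p0 p1 p2 p3 :: "'a"
  assumes V: "p0 \<in> V" "p1 \<in> V" "p2 \<in> V" "p3 \<in> V"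
    and d: "p0 \<noteq> p1" "p0 \<noteq> p2" "p0 \<noteq> p3" "p1 \<noteq> p2" "p1 \<noteq> p3" "p2 \<noteq> p3"
    and e: "{p0,p1} \<in> E" "{p1,p2} \<in> E" "{p2,p3} \<in> E" "{p3,p0} \<in> E"
    and ne: "{p0,p2} \<notin> E" "{p1,p3} \<notin> E"
  shows "contains_induced (V,E) (cycle_graph 4)"
proof -
  define \<phi> where "\<phi> = (\<lambda>u::nat. if u = 0 then p0 else if u = 1 then p1 else if u = 2 then p2 else p3)"
  have fst4: "fst (cycle_graph 4) = {0,1,2,3}" unfolding cycle_graph_def by auto
  have "inj_on \<phi> {0,1,2,3}" unfolding \<phi>_def using d by (auto simp: inj_on_def)
  moreover have "\<phi> ` {0,1,2,3} \<subseteq> V" unfolding \<phi>_def using V by auto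
  moreover have "\<forall>u\<in>{0,1,2,3}. \<forall>v\<in>{0,1,2,3}. u \<noteq> v \<longrightarrow>
        ({u, v} \<in> {{0,1},{1,2},{2,3},{3,0::nat}} \<longleftrightarrow> {\<phi> u, \<phi> v} \<in> E)"
  proof (intro ballI impI)
    fix u v :: nat assume u: "u \<in> {0,1,2,3}" and v: "v \<in> {0,1,2,3}" and uv: "u \<noteq> v"
    have e2: "{p1,p0} \<in> E" "{p2,p1} \<in> E" "{p3,p2} \<in> E" "{p0,p3} \<in> E"
      using e by (simp_all add: insert_commute)
    have ne2: "{p2,p0} \<notin> E" "{p3,p1} \<notin> E" using ne by (simp_all add: insert_commute)
    from u have "u=0 \<or> u=1 \<or> u=2 \<or> u=3" by simp
    moreover from v have "v=0 \<or> v=1 \<or> v=2 \<or> v=3" by simp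
    ultimately show "{u, v} \<in> {{0,1},{1,2},{2,3},{3,0::nat}} \<longleftrightarrow> {\<phi> u, \<phi> v} \<in> E"
      using uv e ne e2 ne2 by (elim disjE) (simp_all add: \<phi>_def doubleton_eq_iff)
  qed
  ultimately show ?thesis unfolding contains_induced_def fst4 c4_edges by (intro exI[of _ \<phi>]) simp
qed


lemma blowup3_edge:
  assumes "u \<in> fst (blowup 3 f)" "v \<in> fst (blowup 3 f)" "u \<noteq> v"
  shows "{u,v} \<in> snd (blowup 3 f)"
proof -
  obtain i j i' j' where u: "u = (i,j)" and v: "v = (i',j')" by (cases u, cases v) auto
  have r: "i<3" "j<f" "i'<3" "j'<f" using assms u v by (auto simp: blowup_def)
  have "i = 0 \<or> i = 1 \<or> i = 2" "i' = 0 \<or> i' = 1 \<or> i' = 2" using r(1,3) by arith+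
  hence "i' = i \<or> i' = (i+1) mod 3 \<or> i = (i'+1) mod 3" by (elim disjE) simp_all
  thus ?thesis using blowup_edge[OF r(1,3,2,4)] assms(3) u v by simp
qed

lemma clique_embed:
  assumes Y: "Y \<subseteq> V" "finite Y" "card Y \<ge> 3 * f"
    and cl: "\<And>y y'. y \<in> Y \<Longrightarrow> y' \<in> Y \<Longrightarrow> y \<noteq> y' \<Longrightarrow> {y,y'} \<in> E"
  shows "contains_induced (V,E) (blowup 3 f)"
proof -
  have fB: "fst (blowup 3 f) = {0..<3} \<times> {0..<f}" by (simp add: blowup_def)
  have "card (fst (blowup 3 f)) \<le> card Y" using Y(3) by (simp add: fB)
  then obtain \<phi> where \<phi>: "\<phi> ` fst (blowup 3 f) \<subseteq> Y" "inj_on \<phi> (fst (blowup 3 f))"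
    using card_le_inj[OF _ Y(2)] by (metis fB finite_SigmaI finite_atLeastLessThan)
  show ?thesis unfolding contains_induced_def
  proof (intro exI[of _ \<phi>] conjI)
    show "inj_on \<phi> (fst (blowup 3 f))" by (rule \<phi>(2))
    show "\<phi> ` fst (blowup 3 f) \<subseteq> fst (V, E)" using \<phi>(1) Y(1) by auto
    show "\<forall>u\<in>fst (blowup 3 f). \<forall>v\<in>fst (blowup 3 f). u \<noteq> v \<longrightarrow>
      ({u, v} \<in> snd (blowup 3 f)) = ({\<phi> u, \<phi> v} \<in> snd (V, E))"
    proof (intro ballI impI)
      fix u v assume uv: "u \<in> fst (blowup 3 f)" "v \<in> fst (blowup 3 f)" "u \<noteq> v"
      have "\<phi> u \<noteq> \<phi> v" using \<phi>(2) uv by (meson inj_on_def)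
      moreover have "\<phi> u \<in> Y" "\<phi> v \<in> Y" using \<phi>(1) uv by auto
      ultimately show "({u, v} \<in> snd (blowup 3 f)) = ({\<phi> u, \<phi> v} \<in> snd (V, E))"
        using cl blowup3_edge[OF uv] by simp
    qed
  qed
qed

lemma blowup_embed:
  assumes g: "\<And>i. i<k \<Longrightarrow> inj_on (g i) {0..<f}" "\<And>i j. i<k \<Longrightarrow> j<f \<Longrightarrow> g i j \<in> X i"
    and X: "\<And>i. i<k \<Longrightarrow> X i \<subseteq> {0..<m}"
    and cross: "\<And>i i' a b. i<k \<Longrightarrow> i'<k \<Longrightarrow> i \<noteq> i' \<Longrightarrow> a \<in> X i \<Longrightarrow> b \<in> X i' \<Longrightarrow>
        ({(i,a),(i',b)} \<in> E \<longleftrightarrow> {(i,a),(i',b)} \<in> snd (blowup k m))"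
    and inner: "\<And>i a b. i<k \<Longrightarrow> a \<in> X i \<Longrightarrow> b \<in> X i \<Longrightarrow> a \<noteq> b \<Longrightarrow> {(i,a),(i,b)} \<in> E"
  shows "contains_induced (fst (blowup k m), E) (blowup k f)"
proof -
  define \<phi> where "\<phi> = (\<lambda>(i,j). (i, g i j))"
  have fB: "fst (blowup k f) = {0..<k} \<times> {0..<f}" by (simp add: blowup_def)
  have fBm: "fst (blowup k m) = {0..<k} \<times> {0..<m}" by (simp add: blowup_def)
  show ?thesis unfolding contains_induced_def
  proof (intro exI[of _ \<phi>] conjI)
    show "inj_on \<phi> (fst (blowup k f))" unfolding fB
    proof (rule inj_onI)
      fix x y assume "x \<in> {0..<k} \<times> {0..<f}" "y \<in> {0..<k} \<times> {0..<f}" "\<phi> x = \<phi> y"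
      thus "x = y" using g(1) unfolding \<phi>_def by (auto simp: inj_on_def)
    qed
    show "\<phi> ` fst (blowup k f) \<subseteq> fst (fst (blowup k m), E)" unfolding fB fBm \<phi>_def
      using g(2) X by fastforce
    show "\<forall>u\<in>fst (blowup k f). \<forall>v\<in>fst (blowup k f). u \<noteq> v \<longrightarrow>
      ({u, v} \<in> snd (blowup k f)) = ({\<phi> u, \<phi> v} \<in> snd (fst (blowup k m), E))"
    proof (intro ballI impI)
      fix u v assume u: "u \<in> fst (blowup k f)" and v: "v \<in> fst (blowup k f)" and uv: "u \<noteq> v"
      obtain i j i' j' where uu: "u = (i,j)" and vv: "v = (i',j')" by (cases u, cases v) auto
      have r: "i<k" "j<f" "i'<k" "j'<f" using u v uu vv by (auto simp: fB)
      have gi: "g i j \<in> X i" "g i' j' \<in> X i'" using g(2) r by auto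
      have gm: "g i j < m" "g i' j' < m" using gi X[OF r(1)] X[OF r(3)] by auto
      show "({u, v} \<in> snd (blowup k f)) = ({\<phi> u, \<phi> v} \<in> snd (fst (blowup k m), E))"
      proof (cases "i = i'")
        case True
        hence "j \<noteq> j'" using uv uu vv by simp
        hence "g i j \<noteq> g i j'" using g(1)[OF r(1)] r True by (auto simp: inj_on_def)
        hence "{(i, g i j), (i, g i j')} \<in> E" using inner[OF r(1)] gi True by simp
        moreover have "{u,v} \<in> snd (blowup k f)" using blowup_edge[OF r(1,3,2,4)] uu vv uv True by simp
        ultimately show ?thesis using True uu vv by (simp add: \<phi>_def)
      next
        case False
        have "{u,v} \<in> snd (blowup k f) \<longleftrightarrow> (i' = i \<or> i' = (i+1) mod k \<or> i = (i'+1) mod k)"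
          using blowup_edge[OF r(1,3,2,4)] uu vv uv by simp
        also have "\<dots> \<longleftrightarrow> {(i, g i j), (i', g i' j')} \<in> snd (blowup k m)"
          using blowup_edge[OF r(1,3) gm] False by simp
        also have "\<dots> \<longleftrightarrow> {(i, g i j), (i', g i' j')} \<in> E" using cross[OF r(1,3) False gi] by simp
        finally show ?thesis using uu vv by (simp add: \<phi>_def)
      qed
    qed
  qed
qed


lemma card_PiE_le2:
  assumes ii: "i<k" "i'<k" "i \<noteq> i'"
  shows "card (PiE {0..<k} (\<lambda>j. if j = i then {a} else if j = i' then {b} else {0..<m})) \<le> m^(k-2)"
proof -
  define F where "F = (\<lambda>j. card (if j = i then {a} else if j = i' then {b} else {0..<m}))"
  have "card (PiE {0..<k} (\<lambda>j. if j = i then {a} else if j = i' then {b} else {0..<m})) = prod F {0..<k}"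
    by (simp add: card_PiE F_def)
  also have "\<dots> = prod F ({0..<k} - {i,i'}) * prod F {i,i'}"
    using ii by (subst prod.subset_diff[of "{i,i'}"]) auto
  also have "prod F {i,i'} = 1" using ii by (simp add: F_def)
  also have "prod F ({0..<k} - {i,i'}) = m ^ card ({0..<k} - {i,i'})"
    by (simp add: F_def)
  also have "card ({0..<k} - {i,i'}) = k - 2" using ii by (subst card_Diff_subset) auto
  finally show ?thesis by simp
qed

lemma init_count:
  fixes Ds :: "(nat \<times> nat) set set"
  assumes fin: "finite Ds" and cD: "real (card Ds) \<le> real m^2 / 2" and k: "k \<ge> 2"
  shows "real (card (Tset k (\<lambda>i a i' b. {(i,a),(i',b)} \<in> Ds) (\<lambda>_. {0..<m}))) \<ge> (1/2) * real m ^ k"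
proof -
  define Bd where "Bd = (\<lambda>i a i' b. {(i,a),(i',b)} \<in> Ds)"
  define Pa where "Pa = PiE {0..<k} (\<lambda>_::nat. {0..<m})"
  define T where "T = Tset k Bd (\<lambda>_. {0..<m})"
  define B where "B d = {t\<in>Pa. \<exists>i<k. \<exists>i'<k. i \<noteq> i' \<and> {(i,t i),(i',t i')} = d}" for d
  have fPa: "finite Pa" unfolding Pa_def by (rule finite_PiE) auto
  have cPa: "card Pa = m^k" by (simp add: Pa_def card_PiE)
  have TP: "T \<subseteq> Pa" unfolding T_def Tset_def Pa_def by auto
  have bad: "Pa - T \<subseteq> (\<Union>d\<in>Ds. B d)"
  proof
    fix t assume t: "t \<in> Pa - T"
    then obtain i i' where ii: "i<k" "i'<k" "i \<noteq> i'" "Bd i (t i) i' (t i')"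
      unfolding T_def Tset_def Pa_def goodt_def by auto
    hence "{(i,t i),(i',t i')} \<in> Ds" unfolding Bd_def by simp
    moreover have "t \<in> B {(i,t i),(i',t i')}"
    proof -
      have "t \<in> Pa" using t by simp
      moreover have "\<exists>j<k. \<exists>j'<k. j \<noteq> j' \<and> {(j,t j),(j',t j')} = {(i,t i),(i',t i')}"
        using ii(1-3) by blast
      ultimately show ?thesis unfolding B_def by simp
    qed
    ultimately show "t \<in> (\<Union>d\<in>Ds. B d)" by (rule UN_I)
  qed
  have Ble: "card (B d) \<le> m^(k-2)" for d
  proof (cases "B d = {}")
    case False
    then obtain t0 where "t0 \<in> B d" by blast
    hence "\<exists>i<k. \<exists>i'<k. i \<noteq> i' \<and> {(i,t0 i),(i',t0 i')} = d" unfolding B_def by simp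
    then obtain i i' where ii: "i<k" "i'<k" "i \<noteq> i'" and d: "d = {(i,t0 i),(i',t0 i')}" by metis
    have "B d \<subseteq> PiE {0..<k} (\<lambda>j. if j = i then {t0 i} else if j = i' then {t0 i'} else {0..<m})"
    proof
      fix t assume t: "t \<in> B d"
      have tP: "t \<in> Pa" and "\<exists>j<k. \<exists>j'<k. j \<noteq> j' \<and> {(j,t j),(j',t j')} = d" using t unfolding B_def by simp_all
      then obtain j j' where e: "{(j,t j),(j',t j')} = {(i,t0 i),(i',t0 i')}" unfolding d by blast
      from e have "((j,t j) = (i,t0 i) \<and> (j',t j') = (i',t0 i')) \<or> ((j,t j) = (i',t0 i') \<and> (j',t j') = (i,t0 i))"
        by (simp add: doubleton_eq_iff)
      hence "t i = t0 i \<and> t i' = t0 i'" by auto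
      thus "t \<in> PiE {0..<k} (\<lambda>j. if j = i then {t0 i} else if j = i' then {t0 i'} else {0..<m})"
        using tP unfolding Pa_def by (auto simp: PiE_def Pi_def)
    qed
    moreover have "finite (PiE {0..<k} (\<lambda>j. if j = i then {t0 i} else if j = i' then {t0 i'} else {0..<m}))"
      by (rule finite_PiE) auto
    ultimately have "card (B d) \<le> card (PiE {0..<k} (\<lambda>j. if j = i then {t0 i} else if j = i' then {t0 i'} else {0..<m}))"
      by (rule card_mono[rotated])
    thus ?thesis using card_PiE_le2[OF ii] by (rule le_trans)
  qed simp
  have fB: "finite (B d)" for d unfolding B_def using fPa by simp
  have "card (Pa - T) \<le> card (\<Union>d\<in>Ds. B d)" using bad fin fB by (intro card_mono) auto
  also have "\<dots> \<le> (\<Sum>d\<in>Ds. card (B d))" by (rule card_UN_le[OF fin])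
  also have "\<dots> \<le> (\<Sum>d\<in>Ds. m^(k-2))" by (intro sum_mono Ble)
  also have "\<dots> = card Ds * m^(k-2)" by simp
  finally have c1: "card (Pa - T) \<le> card Ds * m^(k-2)" .
  have c2: "card (Pa - T) = card Pa - card T" using card_Diff_subset[OF finite_subset[OF TP fPa] TP] .
  have c3: "card T \<le> card Pa" using card_mono[OF fPa TP] .
  have "real (card Pa) - real (card T) \<le> real (card Ds) * real m^(k-2)"
  proof -
    have "real (card (Pa - T)) \<le> real (card Ds * m^(k-2))" using c1 by (simp only: of_nat_le_iff)
    moreover have "real (card (Pa - T)) = real (card Pa) - real (card T)" using c2 c3 by (simp add: of_nat_diff)
    ultimately show ?thesis by simp
  qed
  moreover have "real (card Ds) * real m^(k-2) \<le> real m^2/2 * real m^(k-2)"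
    using cD by (intro mult_right_mono) auto
  moreover have "real m ^ k = real m^2 * real m^(k-2)" using k by (metis power_add le_add_diff_inverse)
  ultimately have "real (card Pa) - real (card T) \<le> (1/2) * real m^k" by simp
  hence "real (card T) \<ge> (1/2) * real m^k" unfolding cPa by simp
  thus ?thesis unfolding T_def Bd_def .
qed


lemma suc_mod: "(x::nat) < k \<Longrightarrow> (x+1) mod k = (if x+1 < k then x+1 else 0)"
proof (cases "x+1 < k")
  case False
  assume "x<k"
  hence "x+1 = k" using False by simp
  thus ?thesis by simp
qed simp

lemma pred_mod: "(i::nat) < k \<Longrightarrow> (i+k-1) mod k = (if i = 0 then k-1 else i-1)"
proof (cases "i = 0")
  case False
  assume "i<k"
  hence e: "i+k-1 = (i-1) + k" using False by arith
  have "(i+k-1) mod k = (i-1) mod k" unfolding e by simp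
  thus ?thesis using False \<open>i<k\<close> by simp
qed simp

theorem lemma5p3:
  fixes k f :: nat
  assumes "k \<ge> 3" and "f \<ge> 1"
  shows "\<exists>n1. \<forall>n\<ge>n1. k dvd n \<longrightarrow>
           far_from (1 / (2 * real k ^ 2)) (induced_C4_Bkf_free k f) (blowup k (n div k))"
proof -
  have k3: "k \<ge> 3" and f1: "f \<ge> 1" using assms by auto
  define F where "F = 3*f"
  define R where "R = nat \<lceil>Mb (k*F) (1/2)\<rceil> + 1"
  show ?thesis
  proof (intro exI[of _ "k*R"] allI impI)
    fix n assume n: "n \<ge> k*R" and dvd: "k dvd n"
    define m where "m = n div k"
    have km: "n = k*m" using dvd by (simp add: m_def)
    have mR: "R \<le> m" using n km k3 by simp
    have m1: "m \<ge> 1" using mR unfolding R_def by simp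
    have mMb: "real m \<ge> Mb (k*F) (1/2)"
    proof -
      have "Mb (k*F) (1/2) \<le> real (nat \<lceil>Mb (k*F) (1/2)\<rceil>)" by (rule real_nat_ceiling_ge)
      also have "\<dots> \<le> real m"
      proof -
        have "nat \<lceil>Mb (k*F) (1/2)\<rceil> \<le> m" using mR unfolding R_def by linarith
        thus ?thesis by (rule of_nat_mono)
      qed
      finally show ?thesis .
    qed
    define V where "V = fst (blowup k m)"
    define E where "E = snd (blowup k m)"
    have V: "V = {0..<k} \<times> {0..<m}" by (simp add: V_def blowup_def)
    have cV: "card V = k*m" by (simp add: V card_cartesian_product)
    show "far_from (1 / (2 * real k ^ 2)) (induced_C4_Bkf_free k f) (blowup k (n div k))"
      unfolding far_from_def m_def[symmetric] V_def[symmetric] E_def[symmetric]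
    proof (intro allI impI)
      fix E' assume H: "simple_graph (V, E') \<and> induced_C4_Bkf_free k f (V, E')"
      define Ds where "Ds = (E - E') \<union> (E' - E)"
      show "1 / (2 * real k ^ 2) * real (card V)^2 \<le> real (card ((E - E') \<union> (E' - E)))"
      proof (rule ccontr)
        assume "\<not> ?thesis"
        hence lt: "real (card Ds) < 1 / (2 * real k ^ 2) * real (card V)^2" unfolding Ds_def by simp
        have "1 / (2 * real k ^ 2) * real (card V)^2 = real m^2/2" using k3 unfolding cV
          by (simp add: power2_eq_square field_simps)
        with lt have cD: "real (card Ds) \<le> real m^2 / 2" by simp
        have noC4: "\<not> contains_induced (V,E') (cycle_graph 4)"
          and noB: "\<not> contains_induced (V,E') (blowup k f)" using H by (auto simp: induced_C4_Bkf_free_def)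
        have EV: "E \<subseteq> Pow V" unfolding E_def V_def by (rule blowup_edges_sub)
        have E'V: "E' \<subseteq> Pow V" using H unfolding simple_graph_def by auto
        have finV: "finite V" unfolding V by simp
        have finD: "finite Ds" unfolding Ds_def using EV E'V finV
          by (meson finite_Pow_iff finite_Un finite_subset Diff_subset le_supI order_trans)
        define Bd where "Bd = (\<lambda>i a i' b. {(i::nat,a::nat),(i',b)} \<in> Ds)"
        have sym: "\<And>i a i' b. Bd i a i' b \<Longrightarrow> Bd i' b i a" unfolding Bd_def by (simp add: insert_commute)
        have N0: "real (card (Tset k Bd (\<lambda>_. {0..<m}))) \<ge> (1/2) * real m ^ k"
          unfolding Bd_def using init_count[OF finD cD] k3 by simp
        have sq: "sum (\<lambda>_. F) {..<k} = k*F" by simp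
        have "\<exists>X. (\<forall>i<k. X i \<subseteq> (\<lambda>_. {0..<m}) i \<and> card (X i) = (\<lambda>_. F) i) \<and>
           (\<forall>i<k. \<forall>i'<k. i \<noteq> i' \<longrightarrow> (\<forall>a\<in>X i. \<forall>b\<in>X i'. \<not> Bd i a i' b))"
          by (rule iter[where Bd=Bd and q="\<lambda>_. F" and k=k and C="\<lambda>_. {0..<m}" and c="1/2" and r="k*F" and m=m, OF sym m1 sq])
            (use N0 mMb in auto)
        then obtain X where X1: "\<forall>i<k. X i \<subseteq> {0..<m} \<and> card (X i) = F"
          and X2: "\<forall>i<k. \<forall>i'<k. i \<noteq> i' \<longrightarrow> (\<forall>a\<in>X i. \<forall>b\<in>X i'. \<not> Bd i a i' b)"
          by (elim exE conjE) simp
        have Xm: "\<And>i. i<k \<Longrightarrow> X i \<subseteq> {0..<m}" and cX: "\<And>i. i<k \<Longrightarrow> card (X i) = F" using X1 by auto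
        have finX: "\<And>i. i<k \<Longrightarrow> finite (X i)" using Xm finite_subset by blast
        have cross: "\<And>i i' a b. i<k \<Longrightarrow> i'<k \<Longrightarrow> i \<noteq> i' \<Longrightarrow> a \<in> X i \<Longrightarrow> b \<in> X i' \<Longrightarrow>
             ({(i,a),(i',b)} \<in> E' \<longleftrightarrow> {(i,a),(i',b)} \<in> E)"
        proof -
          fix i i' a b assume "i<k" "i'<k" "i \<noteq> i'" "a \<in> X i" "b \<in> X i'"
          hence "\<not> Bd i a i' b" using X2 by blast
          thus "({(i,a),(i',b)} \<in> E' \<longleftrightarrow> {(i,a),(i',b)} \<in> E)" unfolding Bd_def Ds_def by blast
        qed
        have crossB: "\<And>i i' a b. i<k \<Longrightarrow> i'<k \<Longrightarrow> i \<noteq> i' \<Longrightarrow> a \<in> X i \<Longrightarrow> b \<in> X i' \<Longrightarrow>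
             ({(i,a),(i',b)} \<in> E' \<longleftrightarrow> (i' = i \<or> i' = (i+1) mod k \<or> i = (i'+1) mod k))"
        proof -
          fix i i' a b assume ii: "i<k" "i'<k" "i \<noteq> i'" "a \<in> X i" "b \<in> X i'"
          have "a < m" "b < m" using ii(4,5) Xm[OF ii(1)] Xm[OF ii(2)] by auto
          thus "?thesis i i' a b" using cross[OF ii] blowup_edge[OF ii(1,2), of a m b] ii(3) unfolding E_def by simp
        qed
        have nonempty: "\<And>i. i<k \<Longrightarrow> X i \<noteq> {}" using cX f1 unfolding F_def by (metis card.empty mult_is_0 not_one_le_zero zero_neq_numeral)
        show False
        proof (cases "k = 3")
          case True
          have clique_case: "\<exists>a\<in>X i. \<exists>b\<in>X i. a \<noteq> b \<and> {(i,a),(i,b)} \<notin> E'" if i: "i<k" for i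
          proof (rule ccontr)
            assume "\<not> ?thesis"
            hence cl: "\<And>y y'. y \<in> {i} \<times> X i \<Longrightarrow> y' \<in> {i} \<times> X i \<Longrightarrow> y \<noteq> y' \<Longrightarrow> {y,y'} \<in> E'" by auto
            have Y1: "{i} \<times> X i \<subseteq> V" using Xm[OF i] i unfolding V by auto
            have Y3: "card ({i} \<times> X i) \<ge> 3 * f" using cX[OF i] unfolding F_def by (simp add: card_cartesian_product)
            have Y2: "finite ({i} \<times> X i)" using finX[OF i] by simp
            have "contains_induced (V,E') (blowup 3 f)" by (rule clique_embed[OF Y1 Y2 Y3 cl])
            thus False using noB True by simp
          qed
          obtain a b where ab: "a \<in> X 0" "b \<in> X 0" "a \<noteq> b" "{(0,a),(0,b)} \<notin> E'" using clique_case[of 0] True by auto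
          obtain c d where cd: "c \<in> X 1" "d \<in> X 1" "c \<noteq> d" "{(1,c),(1,d)} \<notin> E'" using clique_case[of 1] True by auto
          have e1: "{(0,a),(1,c)} \<in> E'" using crossB[of 0 1 a c] ab cd True by simp
          have e2: "{(1,c),(0,b)} \<in> E'" using crossB[of 1 0 c b] ab cd True by simp
          have e3: "{(0,b),(1,d)} \<in> E'" using crossB[of 0 1 b d] ab cd True by simp
          have e4: "{(1,d),(0,a)} \<in> E'" using crossB[of 1 0 d a] ab cd True by simp
          have X01: "X 0 \<subseteq> {0..<m}" "X 1 \<subseteq> {0..<m}" using Xm True by auto
          have inV: "(0,a) \<in> V" "(1,c) \<in> V" "(0,b) \<in> V" "(1,d) \<in> V" using ab cd X01 True unfolding V by auto
          have "contains_induced (V,E') (cycle_graph 4)"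
            by (rule C4_found[OF inV]) (use ab cd e1 e2 e3 e4 in auto)
          thus False using noC4 by simp
        next
          case False
          hence k4: "k \<ge> 4" using k3 by simp
          show False
          proof (cases "\<forall>i<k. \<forall>a\<in>X i. \<forall>b\<in>X i. a \<noteq> b \<longrightarrow> {(i,a),(i,b)} \<in> E'")
            case True
            have "\<forall>i. \<exists>g. i<k \<longrightarrow> inj_on g {0..<f} \<and> g ` {0..<f} \<subseteq> X i"
            proof
              fix i show "\<exists>g. i<k \<longrightarrow> inj_on g {0..<f} \<and> g ` {0..<f} \<subseteq> X i"
              proof (cases "i<k")
                case True
                have "card {0..<f} \<le> card (X i)" using cX[OF True] unfolding F_def by simp
                then obtain g where "g ` {0..<f} \<subseteq> X i" "inj_on g {0..<f}"
                  using card_le_inj[OF _ finX[OF True]] by blast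
                thus ?thesis by blast
              qed simp
            qed
            then obtain G where G: "\<forall>i. i<k \<longrightarrow> inj_on (G i) {0..<f} \<and> G i ` {0..<f} \<subseteq> X i"
              by metis
            have "contains_induced (fst (blowup k m), E') (blowup k f)"
            proof (rule blowup_embed[where g=G and X=X])
              show "\<And>i. i<k \<Longrightarrow> inj_on (G i) {0..<f}" using G by blast
              show "\<And>i j. i<k \<Longrightarrow> j<f \<Longrightarrow> G i j \<in> X i" using G by fastforce
              show "\<And>i. i<k \<Longrightarrow> X i \<subseteq> {0..<m}" by (rule Xm)
              show "\<And>i i' a b. i<k \<Longrightarrow> i'<k \<Longrightarrow> i \<noteq> i' \<Longrightarrow> a \<in> X i \<Longrightarrow> b \<in> X i' \<Longrightarrow>
                ({(i,a),(i',b)} \<in> E' \<longleftrightarrow> {(i,a),(i',b)} \<in> snd (blowup k m))"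
                using cross unfolding E_def by blast
              show "\<And>i a b. i<k \<Longrightarrow> a \<in> X i \<Longrightarrow> b \<in> X i \<Longrightarrow> a \<noteq> b \<Longrightarrow> {(i,a),(i,b)} \<in> E'"
                using True by blast
            qed
            thus False using noB unfolding V_def by simp
          next
            case False
            then obtain i a b where i: "i<k" and ab: "a \<in> X i" "b \<in> X i" "a \<noteq> b" "{(i,a),(i,b)} \<notin> E'"
              by blast
            define i1 where "i1 = (i+1) mod k"
            define i2 where "i2 = (i+k-1) mod k"
            have i1: "i1 = (if i+1 < k then i+1 else 0)" unfolding i1_def using suc_mod[OF i] .
            have i2: "i2 = (if i = 0 then k-1 else i-1)" unfolding i2_def using pred_mod[OF i] .
            have r: "i1 < k" "i2 < k" using i k4 unfolding i1 i2 by auto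
            have c1: "i1 = (i+1) mod k" by (simp add: i1_def)
            have c2: "i = (i2+1) mod k" using suc_mod[OF r(2)] i k4 unfolding i2 by auto
            have n1: "i1 \<noteq> i" "i2 \<noteq> i" "i1 \<noteq> i2" using i k4 unfolding i1 i2 by auto
            have n2: "\<not> (i2 = i1 \<or> i2 = (i1+1) mod k \<or> i1 = (i2+1) mod k)"
              using suc_mod[OF r(1)] suc_mod[OF r(2)] i k4 unfolding i1 i2 by auto
            obtain c where c: "c \<in> X i1" using nonempty[OF r(1)] by blast
            obtain d where d: "d \<in> X i2" using nonempty[OF r(2)] by blast
            have e1: "{(i,a),(i1,c)} \<in> E'" using crossB[OF i r(1) n1(1)[symmetric] ab(1) c] c1 by simp
            have e2: "{(i1,c),(i,b)} \<in> E'" using crossB[OF r(1) i n1(1) c ab(2)] c1 by simp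
            have e3: "{(i,b),(i2,d)} \<in> E'" using crossB[OF i r(2) n1(2)[symmetric] ab(2) d] c2 by simp
            have e4: "{(i2,d),(i,a)} \<in> E'" using crossB[OF r(2) i n1(2) d ab(1)] c2 by simp
            have e5: "{(i1,c),(i2,d)} \<notin> E'" using crossB[OF r(1) r(2) n1(3) c d] n2 by simp
            have inV: "(i,a) \<in> V" "(i1,c) \<in> V" "(i,b) \<in> V" "(i2,d) \<in> V"
              using ab c d Xm[OF i] Xm[OF r(1)] Xm[OF r(2)] i r unfolding V by auto
            have "contains_induced (V,E') (cycle_graph 4)"
              by (rule C4_found[OF inV]) (use ab n1 e1 e2 e3 e4 e5 in auto)
            thus False using noC4 by simp
          qed
        qed
      qed
    qed
  qed
qed


end
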